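(* Let $n\geq 3$ and $m\in\{1,\ldots,n\}$ be integers. Then the community code $C_{n,m}\subseteq\mathbb{F}_2^{N}$, $N=\binom{n}{2}$, is not a linear code (i.e., it is not an $\mathbb{F}_2$-linear subspace of $\mathbb{F}_2^N$).
   Context: For integers $n\geq 2$, $N=\binom{n}{2}$ and $1\leq m\leq n$, the community code $C_{n,m}\subseteq\mathbb{F}_2^N$ consists of exactly those binary vectors of length $N$ that are the upper-triangular (off-diagonal) part of the adjacency matrix of a simple undirected graph on the labeled vertex set $\{1,\ldots,n\}$ which is a disjoint union of cliques, each clique having at least $m$ vertices. (Equivalently, codewords correspond to partitions of $\{1,\ldots,n\}$ into parts of size at least $m$, where two vertices are adjacent iff they lie in the same part.) *)

theory Defs
  imports Main "HOL.Modules" "HOL-Library.Function_Algebras" "HOL-Library.Z2" "HOL-Library.Disjoint_Sets"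
begin

text \<open>Coordinates of F_2^N, N = n choose 2: pairs (i,j) with 1 \<le> i < j \<le> n.
  Vectors are functions (nat \<times> nat) \<Rightarrow> bit vanishing outside these coordinates.\<close>

definition coords :: "nat \<Rightarrow> (nat \<times> nat) set" where
  "coords n = {(i, j). 1 \<le> i \<and> i < j \<and> j \<le> n}"

text \<open>Upper-triangular part of the adjacency matrix of the disjoint union of
  cliques given by the partition P of {1..n}.\<close>

definition clique_vector :: "nat \<Rightarrow> nat set set \<Rightarrow> (nat \<times> nat) \<Rightarrow> bit" where
  "clique_vector n P = (\<lambda>(i, j). if (i, j) \<in> coords n \<and> (\<exists>B\<in>P. i \<in> B \<and> j \<in> B) then 1 else 0)"

definition community_code :: "nat \<Rightarrow> nat \<Rightarrow> ((nat \<times> nat) \<Rightarrow> bit) set" where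
  "community_code n m = {clique_vector n P | P. partition_on {1..n} P \<and> (\<forall>B\<in>P. card B \<ge> m)}"

definition F2_linear :: "((nat \<times> nat) \<Rightarrow> bit) set \<Rightarrow> bool" where
  "F2_linear C \<longleftrightarrow> module.subspace (\<lambda>(c::bit) x p. c * x p) C"

end

theory Submission
  imports Defs
begin

lemma modbit: "module (\<lambda>(c::bit) (x::(nat\<times>nat) \<Rightarrow> bit) p. c * x p)"
  by unfold_locales (auto simp: fun_eq_iff algebra_simps)

lemma sub_unf: "module.subspace (\<lambda>(c::bit) (x::(nat\<times>nat) \<Rightarrow> bit) p. c * x p) S \<Longrightarrow> 0 \<in> S \<and> (\<forall>x\<in>S. \<forall>y\<in>S. x + y \<in> S)"
  apply (subst (asm) module.subspace_def[OF modbit])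
  apply (elim conjE)
  apply (intro conjI)
   apply assumption+
  done

lemma zero_notin:
  assumes "n \<ge> 3" "2 \<le> m"
  shows "(0 :: (nat \<times> nat) \<Rightarrow> bit) \<notin> community_code n m"
proof
  assume "(0 :: (nat \<times> nat) \<Rightarrow> bit) \<in> community_code n m"
  then obtain P where P: "partition_on {1..n} P" "\<forall>B\<in>P. card B \<ge> m"
    and z: "(0 :: (nat \<times> nat) \<Rightarrow> bit) = clique_vector n P"
    unfolding community_code_def by auto
  have "1 \<in> \<Union>P" using P(1) assms(1) unfolding partition_on_def by auto
  then obtain B where B: "B \<in> P" "1 \<in> B" by auto
  have Bs: "B \<subseteq> {1..n}" using P(1) B unfolding partition_on_def by auto
  have "card B \<ge> 2" using P(2) B assms by fastforce
  moreover have "B \<subseteq> {1} \<Longrightarrow> card B \<le> 1"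
    using card_mono[of "{1::nat}" B] by simp
  ultimately have "\<not> B \<subseteq> {1}" by linarith
  then obtain j where j: "j \<in> B" "j \<noteq> 1" by blast
  have "1 < j" "j \<le> n" using Bs j by auto
  hence "clique_vector n P (1, j) = 1" using B j unfolding clique_vector_def coords_def by auto
  with z show False by (metis zero_fun_def zero_neq_one)
qed

theorem lemma2:
  fixes n m :: nat
  assumes "n \<ge> 3" and "1 \<le> m" and "m \<le> n"
  shows "\<not> F2_linear (community_code n m)"
proof
  assume "F2_linear (community_code n m)"
  hence L: "0 \<in> community_code n m \<and> (\<forall>x\<in>community_code n m. \<forall>y\<in>community_code n m. x + y \<in> community_code n m)"
    unfolding F2_linear_def by (rule sub_unf)
  show False
  proof (cases "m = 1")
    case False
    thus False using L zero_notin[OF assms(1)] assms(2) by fastforce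
  next
    case True
    define P1 where "P1 = {{1,2::nat}, {3..n}}"
    define P2 where "P2 = {{1::nat}, {2..n}}"
    have p1: "partition_on {1..n} P1" using assms(1) unfolding P1_def partition_on_def disjoint_def
      by auto
    have p2: "partition_on {1..n} P2" using assms(1) unfolding P2_def partition_on_def disjoint_def
      by auto
    have c1: "\<forall>B\<in>P1. card B \<ge> m" using assms(1) True unfolding P1_def by auto
    have c2: "\<forall>B\<in>P2. card B \<ge> m" using assms(1) True unfolding P2_def by auto
    have "clique_vector n P1 \<in> community_code n m" using p1 c1 unfolding community_code_def by auto
    moreover have "clique_vector n P2 \<in> community_code n m" using p2 c2 unfolding community_code_def by auto
    ultimately have "clique_vector n P1 + clique_vector n P2 \<in> community_code n m" using L by blast
    then obtain P where P: "partition_on {1..n} P"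
      and e: "clique_vector n P1 + clique_vector n P2 = clique_vector n P"
      unfolding community_code_def by auto
    have "(clique_vector n P1 + clique_vector n P2) (1,2) = 1"
      using assms(1) unfolding clique_vector_def coords_def P1_def P2_def by auto
    hence v12: "clique_vector n P (1,2) = 1" unfolding e .
    have "(clique_vector n P1 + clique_vector n P2) (2,3) = 1"
      using assms(1) unfolding clique_vector_def coords_def P1_def P2_def by auto
    hence v23: "clique_vector n P (2,3) = 1" unfolding e .
    have "(clique_vector n P1 + clique_vector n P2) (1,3) = 0"
      using assms(1) unfolding clique_vector_def coords_def P1_def P2_def by auto
    hence v13: "clique_vector n P (1,3) = 0" unfolding e .
    have "\<exists>B\<in>P. 1 \<in> B \<and> 2 \<in> B"
      using v12 unfolding clique_vector_def by (simp split: if_splits)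
    then obtain B where B: "B \<in> P" "1 \<in> B" "2 \<in> B" by blast
    have "\<exists>B\<in>P. 2 \<in> B \<and> 3 \<in> B"
      using v23 unfolding clique_vector_def by (simp split: if_splits)
    then obtain B' where B': "B' \<in> P" "2 \<in> B'" "3 \<in> B'" by blast
    have "B = B'" using P B B' unfolding partition_on_def disjoint_def by blast
    hence "clique_vector n P (1,3) = 1" using B B' assms(1)
      unfolding clique_vector_def coords_def by auto
    with v13 show False by simp
  qed
qed

end
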